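(* Let $\mathbb{T}=\mathbb{R}/\mathbb{Z}$, let $u:\mathbb{T}\times[0,T]\to\mathbb{R}$ be smooth and $\varphi_0\in C^1(\mathbb{T})$. Consider the grid CIP scheme: $F_j^0=\varphi_0(x_j)$, $G_j^0=\varphi_0'(x_j)$; given $\{F_j^n,G_j^n\}_{j=0}^{M-1}$, let $\varphi_h^n\in V_h$ be the unique function with $\varphi_h^n(x_j)=F_j^n$, $(\varphi_h^n)'(x_j)=G_j^n$; compute, with $\boldsymbol{u}(y_0,y_1,t)=(u(y_0,t),\,y_1u_x(y_0,t))$ and $\boldsymbol{y}_j=(x_j,1)$, $\boldsymbol{k}_{j,1}^n=\boldsymbol{u}(\boldsymbol{y}_j,t^{n+1})$, $\boldsymbol{k}_{j,2}^n=\boldsymbol{u}(\boldsymbol{y}_j-\tfrac{\Delta t_n}{2}\boldsymbol{k}_{j,1}^n,t^{n+1}-\tfrac{\Delta t_n}{2})$, $\boldsymbol{k}_{j,3}^n=\boldsymbol{u}(\boldsymbol{y}_j-\Delta t_n(-\boldsymbol{k}_{j,1}^n+2\boldsymbol{k}_{j,2}^n),t^{n+1}-\Delta t_n)$, $(X_{0,j}^n,X_{1,j}^n)=\boldsymbol{y}_j-\Delta t_n(\tfrac16\boldsymbol{k}_{j,1}^n+\tfrac46\boldsymbol{k}_{j,2}^n+\tfrac16\boldsymbol{k}_{j,3}^n)$; and set $F_j^{n+1}=\varphi_h^n(X_{0,j}^n)$, $G_j^{n+1}=X_{1,j}^n\,(\varphi_h^n)'(X_{0,j}^n)$, $j=0,\dots,M-1$.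 Then the functions $\varphi_h^n$ satisfy $\varphi_h^0=\mathcal{I}_h\varphi_0$ and $\varphi_h^{n+1}=\mathcal{I}_h(\varphi_h^n\circ X^n)$ for $n=0,1,\dots,N-1$.
   Context: Temporal mesh $0=t^0<\dots<t^N=T$, $\Delta t_n=t^{n+1}-t^n$; spatial mesh $0=x_0<\dots<x_M=1$. $V_h$: $C^1(\mathbb{T})$ functions, cubic on each $[x_j,x_{j+1}]$. $\mathcal{I}_h:C^1(\mathbb{T})\to V_h$: $(\mathcal{I}_hg)(x_j)=g(x_j)$, $(\mathcal{I}_hg)'(x_j)=g'(x_j)$, $j=0,\dots,M-1$. $X^n:\mathbb{T}\to\mathbb{T}$: $k_1^n(x)=u(x,t^{n+1})$, $k_2^n(x)=u(x-\tfrac{\Delta t_n}{2}k_1^n(x),t^{n+1}-\tfrac{\Delta t_n}{2})$, $k_3^n(x)=u(x-\Delta t_n(-k_1^n(x)+2k_2^n(x)),t^{n+1}-\Delta t_n)$, $X^n(x)=x-\Delta t_n(\tfrac16k_1^n(x)+\tfrac46k_2^n(x)+\tfrac16k_3^n(x))$. *)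

theory Defs
  imports "HOL-Analysis.Analysis" "HOL-Computational_Algebra.Polynomial"
begin

text \<open>Functions on the torus T = R/Z are represented as 1-periodic functions on the reals.\<close>
definition periodic1 :: "(real \<Rightarrow> 'a) \<Rightarrow> bool" where
  "periodic1 g \<longleftrightarrow> (\<forall>x. g (x + 1) = g x)"

definition C1T :: "(real \<Rightarrow> real) \<Rightarrow> bool" where
  "C1T g \<longleftrightarrow> periodic1 g \<and> (\<forall>x. g differentiable at x) \<and> continuous_on UNIV (deriv g)"

fun Ck_on :: "nat \<Rightarrow> ('a::real_normed_vector) set \<Rightarrow> ('a \<Rightarrow> real) \<Rightarrow> bool" where
  "Ck_on 0 S f = continuous_on S f"
| "Ck_on (Suc k) S f = ((\<forall>z\<in>S. f differentiable at z) \<and>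
      (\<forall>v. Ck_on k S (\<lambda>z. frechet_derivative f (at z) v)))"

definition smooth_on :: "('a::real_normed_vector) set \<Rightarrow> ('a \<Rightarrow> real) \<Rightarrow> bool" where
  "smooth_on S f \<longleftrightarrow> (\<forall>k. Ck_on k S f)"

definition spatial_mesh :: "nat \<Rightarrow> (nat \<Rightarrow> real) \<Rightarrow> bool" where
  "spatial_mesh M x \<longleftrightarrow> M \<ge> 1 \<and> x 0 = 0 \<and> x M = 1 \<and> (\<forall>j<M. x j < x (Suc j))"

definition time_mesh :: "nat \<Rightarrow> real \<Rightarrow> (nat \<Rightarrow> real) \<Rightarrow> bool" where
  "time_mesh N T t \<longleftrightarrow> N \<ge> 1 \<and> t 0 = 0 \<and> t N = T \<and> (\<forall>n<N. t n < t (Suc n))"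

definition Vh :: "nat \<Rightarrow> (nat \<Rightarrow> real) \<Rightarrow> (real \<Rightarrow> real) set" where
  "Vh M x = {g. C1T g \<and> (\<forall>j<M. \<exists>p :: real poly. degree p \<le> 3 \<and>
                  (\<forall>y\<in>{x j..x (Suc j)}. g y = poly p y))}"

definition Ih :: "nat \<Rightarrow> (nat \<Rightarrow> real) \<Rightarrow> (real \<Rightarrow> real) \<Rightarrow> (real \<Rightarrow> real)" where
  "Ih M x g = (THE f. f \<in> Vh M x \<and> (\<forall>j<M. f (x j) = g (x j) \<and> deriv f (x j) = deriv g (x j)))"

definition ux :: "(real \<Rightarrow> real \<Rightarrow> real) \<Rightarrow> real \<Rightarrow> real \<Rightarrow> real" where
  "ux u y t = deriv (\<lambda>z. u z t) y"

text \<open>Characteristic map X^n (third-order Runge--Kutta, backward in time).\<close>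
definition Xmap :: "(real \<Rightarrow> real \<Rightarrow> real) \<Rightarrow> (nat \<Rightarrow> real) \<Rightarrow> nat \<Rightarrow> real \<Rightarrow> real" where
  "Xmap u t n x =
    (let dt = t (Suc n) - t n;
         k1 = u x (t (Suc n));
         k2 = u (x - dt / 2 * k1) (t (Suc n) - dt / 2);
         k3 = u (x - dt * (- k1 + 2 * k2)) (t (Suc n) - dt)
     in x - dt * (k1 / 6 + 4 / 6 * k2 + k3 / 6))"

definition bu :: "(real \<Rightarrow> real \<Rightarrow> real) \<Rightarrow> real \<times> real \<Rightarrow> real \<Rightarrow> real \<times> real" where
  "bu u y s = (u (fst y) s, snd y * ux u (fst y) s)"

definition Xgrid :: "(real \<Rightarrow> real \<Rightarrow> real) \<Rightarrow> (nat \<Rightarrow> real) \<Rightarrow> (nat \<Rightarrow> real) \<Rightarrow> nat \<Rightarrow> nat \<Rightarrow> real \<times> real" where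
  "Xgrid u t x n j =
    (let dt = t (Suc n) - t n;
         y = (x j, 1::real);
         k1 = bu u y (t (Suc n));
         k2 = bu u (y - (dt / 2) *\<^sub>R k1) (t (Suc n) - dt / 2);
         k3 = bu u (y - dt *\<^sub>R (- k1 + 2 *\<^sub>R k2)) (t (Suc n) - dt)
     in y - dt *\<^sub>R ((1/6) *\<^sub>R k1 + (4/6) *\<^sub>R k2 + (1/6) *\<^sub>R k3))"

end

theory Submission
  imports Defs
begin


lemma order_ge2:
  fixes p :: "real poly"
  assumes "p \<noteq> 0" "poly p a = 0" "poly (pderiv p) a = 0"
  shows "2 \<le> order a p"
proof -
  have "pderiv p \<noteq> 0"
  proof
    assume "pderiv p = 0"
    then obtain h where "p = [:h:]" using pderiv_iszero by blast
    with assms show False by simp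
  qed
  then have "order a (pderiv p) \<noteq> 0" using assms(3) order_root by blast
  then show ?thesis using order_pderiv[OF assms(1,2)] by simp
qed

lemma cubic_zero:
  fixes p :: "real poly"
  assumes "degree p \<le> 3" "a \<noteq> b" "poly p a = 0" "poly p b = 0"
    "poly (pderiv p) a = 0" "poly (pderiv p) b = 0"
  shows "p = 0"
proof (rule ccontr)
  assume nz: "p \<noteq> 0"
  have "[:-a,1:]^2 dvd p" using order_ge2[OF nz assms(3,5)] order_divides by blast
  then obtain q where q: "p = [:-a,1:]^2 * q" by (elim dvdE)
  have qnz: "q \<noteq> 0" using nz q by auto
  have "order b p = order b ([:-a,1:]^2) + order b q" using order_mult nz q by metis
  moreover have "order b ([:-a,1:]^2) = 0"
    by (rule order_0I) (use assms(2) in simp)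
  ultimately have "order b q = order b p" by simp
  then have "2 \<le> order b q" using order_ge2[OF nz assms(4,6)] by simp
  then have "[:-b,1:]^2 dvd q" using order_divides by blast
  then obtain r where r: "q = [:-b,1:]^2 * r" by (elim dvdE)
  have rnz: "r \<noteq> 0" using qnz r by auto
  have "degree p = 2 + (2 + degree r)" unfolding q r
    by (subst degree_mult_eq; use rnz in \<open>auto simp: degree_power_eq\<close>)+
  with assms(1) show False by simp
qed

lemma poly_deriv_end:
  fixes h :: "real \<Rightarrow> real" and p :: "real poly"
  assumes ab: "a < b" and y: "y \<in> {a..b}" and eq: "\<forall>z\<in>{a..b}. h z = poly p z"
    and hd: "(h has_real_derivative D) (at y)"
  shows "poly (pderiv p) y = D"
proof -
  have 1: "(poly p has_real_derivative poly (pderiv p) y) (at y within {a..b})"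
    by (rule has_field_derivative_at_within) (rule poly_DERIV)
  have 2: "(poly p has_real_derivative D) (at y within {a..b})"
    by (rule has_field_derivative_transform_within[where d=1 and f=h])
       (use has_field_derivative_at_within[OF hd] y eq in auto)
  show ?thesis
    using vector_derivative_unique_within_closed_interval[of a b y "poly p"] ab y 1 2
    by (auto simp: has_real_derivative_iff_has_vector_derivative)
qed

lemma periodic_nat: fixes h :: "real \<Rightarrow> real" assumes "\<forall>y. h (y + 1) = h y" shows "h (y + real n) = h y"
proof (induction n)
  case 0 then show ?case by simp
next
  case (Suc n)
  have "y + real (Suc n) = (y + real n) + 1" by simp
  then show ?case using assms Suc by metis
qed

lemma periodic_all:
  fixes h :: "real \<Rightarrow> real" and y :: real
  assumes per: "\<forall>y. h (y + 1) = (h y::real)" and z: "\<forall>y\<in>{0..1}. h y = 0"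
  shows "h y = 0"
proof -
  have fr: "frac y \<in> {0..1}" using frac_lt_1[of y] frac_ge_0[of y] by auto
  have y: "y = frac y + of_int \<lfloor>y\<rfloor>" by (simp add: frac_def)
  show ?thesis
  proof (cases "\<lfloor>y\<rfloor> \<ge> 0")
    case True
    then have "of_int \<lfloor>y\<rfloor> = real (nat \<lfloor>y\<rfloor>)" by simp
    then have "h y = h (frac y + real (nat \<lfloor>y\<rfloor>))" using y by metis
    also have "\<dots> = h (frac y)" by (rule periodic_nat[OF per])
    finally show ?thesis using z fr by simp
  next
    case False
    then have "of_int \<lfloor>y\<rfloor> = - real (nat (-\<lfloor>y\<rfloor>))" by simp
    then have "frac y = y + real (nat (-\<lfloor>y\<rfloor>))" using y by linarith
    then have "h (frac y) = h y" using periodic_nat[OF per] by metis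
    then show ?thesis using z fr by simp
  qed
qed

lemma deriv_periodic:
  fixes f :: "real \<Rightarrow> real"
  assumes per: "periodic1 f" and d: "\<forall>x. f differentiable at x"
  shows "deriv f (y + 1) = deriv f y"
proof -
  have "(f has_real_derivative deriv f (y + 1)) (at (y + 1))"
    using d DERIV_deriv_iff_real_differentiable by blast
  then have "((\<lambda>x. f (x + 1)) has_real_derivative deriv f (y + 1)) (at y)"
    using DERIV_shift by blast
  moreover have "(\<lambda>x. f (x + 1)) = f" using per unfolding periodic1_def by auto
  ultimately show ?thesis using DERIV_imp_deriv by fastforce
qed

lemma mesh_cover:
  assumes "\<forall>j<M. x j < (x (Suc j)::real)"
  shows "1 \<le> k \<Longrightarrow> k \<le> M \<Longrightarrow> x 0 \<le> y \<Longrightarrow> y \<le> x k \<Longrightarrow> \<exists>j<k. y \<in> {x j..x (Suc j)}"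
proof (induction k)
  case 0 then show ?case by simp
next
  case (Suc k)
  show ?case
  proof (cases "k \<ge> 1 \<and> y \<le> x k")
    case True
    then show ?thesis using Suc by (metis Suc_leD less_SucI)
  next
    case False
    then have "x k \<le> y"
      using Suc.prems by (cases k) auto
    then show ?thesis using Suc.prems by auto
  qed
qed

lemma Vh_unique:
  assumes sm: "spatial_mesh M x" and f: "f \<in> Vh M x" and g: "g \<in> Vh M x"
    and eq: "\<forall>j<M. f (x j) = g (x j) \<and> deriv f (x j) = deriv g (x j)"
  shows "f = g"
proof -
  have fC: "C1T f" and gC: "C1T g" using f g unfolding Vh_def by auto
  have fd: "\<forall>y. f differentiable at y" and gd: "\<forall>y. g differentiable at y"
    and fp: "periodic1 f" and gp: "periodic1 g" using fC gC unfolding C1T_def by auto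
  define h where "h = (\<lambda>y. f y - g y)"
  have hD: "(h has_real_derivative deriv f y - deriv g y) (at y)" for y
    unfolding h_def using fd gd DERIV_deriv_iff_real_differentiable
    by (blast intro: derivative_intros)
  have per: "\<forall>y. h (y + 1) = h y" using fp gp unfolding h_def periodic1_def by auto
  have M1: "M \<ge> 1" and x0: "x 0 = 0" and xM: "x M = 1" and inc: "\<forall>j<M. x j < x (Suc j)"
    using sm unfolding spatial_mesh_def by auto
  have nodes: "h (x j) = 0 \<and> deriv f (x j) = deriv g (x j)" if "j \<le> M" for j
  proof (cases "j < M")
    case True then show ?thesis using eq unfolding h_def by auto
  next
    case False
    then have "j = M" using that by simp
    moreover have "h 1 = h 0" using per[rule_format, of 0] by simp
    moreover have "deriv f 1 = deriv f 0" using deriv_periodic[OF fp fd, of 0] by simp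
    moreover have "deriv g 1 = deriv g 0" using deriv_periodic[OF gp gd, of 0] by simp
    moreover have "0 < M" using M1 by simp
    ultimately show ?thesis using eq[rule_format, of 0] x0 xM unfolding h_def by simp
  qed
  have onint: "h z = 0" if j: "j < M" and z: "z \<in> {x j..x (Suc j)}" for j z
  proof -
    obtain p :: "real poly" where p: "degree p \<le> 3" "\<forall>y\<in>{x j..x (Suc j)}. f y = poly p y"
      using f j unfolding Vh_def by auto
    obtain q :: "real poly" where q: "degree q \<le> 3" "\<forall>y\<in>{x j..x (Suc j)}. g y = poly q y"
      using g j unfolding Vh_def by auto
    have ab: "x j < x (Suc j)" using inc j by auto
    have heq: "\<forall>y\<in>{x j..x (Suc j)}. h y = poly (p - q) y" using p q unfolding h_def by auto
    have n1: "h (x j) = 0" "deriv f (x j) = deriv g (x j)" using nodes[of j] j by auto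
    have n2: "h (x (Suc j)) = 0" "deriv f (x (Suc j)) = deriv g (x (Suc j))" using nodes[of "Suc j"] j by auto
    have "p - q = 0"
    proof (rule cubic_zero)
      show "degree (p - q) \<le> 3" using p(1) q(1) degree_diff_le by blast
      show "x j \<noteq> x (Suc j)" using ab by simp
      show "poly (p - q) (x j) = 0" using heq n1 ab by auto
      show "poly (p - q) (x (Suc j)) = 0" using heq n2 ab by auto
      show "poly (pderiv (p - q)) (x j) = 0"
        using poly_deriv_end[OF ab _ heq hD, of "x j"] n1 ab by auto
      show "poly (pderiv (p - q)) (x (Suc j)) = 0"
        using poly_deriv_end[OF ab _ heq hD, of "x (Suc j)"] n2 ab by auto
    qed
    then show ?thesis using heq z by simp
  qed
  have "\<forall>y\<in>{0..1}. h y = 0"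
  proof
    fix y :: real assume "y \<in> {0..1}"
    then obtain j where "j < M" "y \<in> {x j..x (Suc j)}"
      using mesh_cover[OF inc M1 order_refl] x0 xM by auto
    then show "h y = 0" using onint by blast
  qed
  then have "h y = 0" for y using periodic_all[OF per] by blast
  then show ?thesis unfolding h_def by (auto simp: fun_eq_iff)
qed

lemma Ih_eq:
  assumes sm: "spatial_mesh M x" and f: "f \<in> Vh M x"
    and eq: "\<forall>j<M. f (x j) = g (x j) \<and> deriv f (x j) = deriv g (x j)"
  shows "Ih M x g = f"
  unfolding Ih_def
proof (rule the_equality)
  show "f \<in> Vh M x \<and> (\<forall>j<M. f (x j) = g (x j) \<and> deriv f (x j) = deriv g (x j))" using f eq by blast
  fix f' assume "f' \<in> Vh M x \<and> (\<forall>j<M. f' (x j) = g (x j) \<and> deriv f' (x j) = deriv g (x j))"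
  then show "f' = f" using Vh_unique[OF sm _ f, of f'] eq by auto
qed


theorem lemma1:
  fixes N M :: nat and T :: real and t x :: "nat \<Rightarrow> real"
    and u :: "real \<Rightarrow> real \<Rightarrow> real" and \<phi>0 :: "real \<Rightarrow> real"
    and F G :: "nat \<Rightarrow> nat \<Rightarrow> real" and \<phi>h :: "nat \<Rightarrow> real \<Rightarrow> real"
  assumes tm: "time_mesh N T t"
    and sm: "spatial_mesh M x"
    and u_smooth: "\<exists>U. open U \<and> UNIV \<times> {0..T} \<subseteq> U \<and> smooth_on U (\<lambda>(y, s). u y s)"
    and u_per: "\<forall>s\<in>{0..T}. \<forall>y. u (y + 1) s = u y s"
    and phi0: "C1T \<phi>0"
    and F0: "\<forall>j<M. F 0 j = \<phi>0 (x j)"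
    and G0: "\<forall>j<M. G 0 j = deriv \<phi>0 (x j)"
    and phiV: "\<forall>n\<le>N. \<phi>h n \<in> Vh M x \<and>
                  (\<forall>j<M. \<phi>h n (x j) = F n j \<and> deriv (\<phi>h n) (x j) = G n j)"
    and Fstep: "\<forall>n<N. \<forall>j<M. F (Suc n) j = \<phi>h n (fst (Xgrid u t x n j))"
    and Gstep: "\<forall>n<N. \<forall>j<M. G (Suc n) j =
                   snd (Xgrid u t x n j) * deriv (\<phi>h n) (fst (Xgrid u t x n j))"
  shows "\<phi>h 0 = Ih M x \<phi>0 \<and> (\<forall>n<N. \<phi>h (Suc n) = Ih M x (\<phi>h n \<circ> Xmap u t n))"
proof -
  have tinc: "\<forall>n<N. t n < t (Suc n)" and t0: "t 0 = 0" and tN: "t N = T"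
    using tm unfolding time_mesh_def by auto
  have tmono: "k \<le> N \<Longrightarrow> i \<le> k \<Longrightarrow> t i \<le> t k" for i k
  proof (induction k)
    case 0 then show ?case by simp
  next
    case (Suc k)
    show ?case
    proof (cases "i = Suc k")
      case False
      then have "t i \<le> t k" using Suc by simp
      also have "t k \<le> t (Suc k)" using tinc Suc.prems by (simp add: less_imp_le)
      finally show ?thesis .
    qed simp
  qed
  have trange: "k \<le> N \<Longrightarrow> t k \<in> {0..T}" for k
    using tmono[of k 0] tmono[of N k] t0 tN by auto
  obtain U where U: "open U" "UNIV \<times> {0..T} \<subseteq> U" "smooth_on U (\<lambda>(y, s). u y s)"
    using u_smooth by blast
  have udiff: "((\<lambda>z. u z s) has_real_derivative ux u y s) (at y)" if s: "s \<in> {0..T}" for s y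
  proof -
    have "Ck_on (Suc 0) U (\<lambda>(y,s). u y s)" using U(3) unfolding smooth_on_def by blast
    moreover have "(y, s) \<in> U" using U(2) s by auto
    ultimately have "(\<lambda>(y,s). u y s) differentiable at (y,s)" by auto
    moreover have "(\<lambda>z. (z, s)) differentiable at y"
      by (auto intro!: derivative_intros)
    ultimately have "((\<lambda>(y,s). u y s) \<circ> (\<lambda>z. (z,s))) differentiable at y"
      by (intro differentiable_chain_at) auto
    then have "(\<lambda>z. u z s) differentiable at y" by (simp add: o_def)
    then show ?thesis unfolding ux_def using DERIV_deriv_iff_real_differentiable by blast
  qed
  have part1: "\<phi>h 0 = Ih M x \<phi>0"
    using phiV F0 G0 by (intro Ih_eq[OF sm, symmetric]) auto
  have part2: "\<phi>h (Suc n) = Ih M x (\<phi>h n \<circ> Xmap u t n)" if nN: "n < N" for n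
  proof -
    define t1 where "t1 = t (Suc n)"
    define dt where "dt = t (Suc n) - t n"
    have r1: "t1 \<in> {0..T}" unfolding t1_def using trange nN by auto
    have r3: "t1 - dt \<in> {0..T}" unfolding t1_def dt_def using trange nN by auto
    have r2: "t1 - dt / 2 \<in> {0..T}" using r1 r3 by auto
    define k1 where "k1 = (\<lambda>y. u y t1)"
    define k1' where "k1' = (\<lambda>y. ux u y t1)"
    define a2 where "a2 = (\<lambda>y. y - dt / 2 * k1 y)"
    define a2' where "a2' = (\<lambda>y. 1 - dt / 2 * k1' y)"
    define k2 where "k2 = (\<lambda>y. u (a2 y) (t1 - dt / 2))"
    define k2' where "k2' = (\<lambda>y. ux u (a2 y) (t1 - dt / 2) * a2' y)"
    define a3 where "a3 = (\<lambda>y. y - dt * (- k1 y + 2 * k2 y))"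
    define a3' where "a3' = (\<lambda>y. 1 - dt * (- k1' y + 2 * k2' y))"
    define k3 where "k3 = (\<lambda>y. u (a3 y) (t1 - dt))"
    define k3' where "k3' = (\<lambda>y. ux u (a3 y) (t1 - dt) * a3' y)"
    define X' where "X' = (\<lambda>y. 1 - dt * (k1' y / 6 + 4 / 6 * k2' y + k3' y / 6))"
    have Xeq: "Xmap u t n = (\<lambda>y. y - dt * (k1 y / 6 + 4 / 6 * k2 y + k3 y / 6))"
      unfolding Xmap_def k1_def k2_def k3_def a2_def a3_def t1_def dt_def Let_def by simp
    have d1: "(k1 has_real_derivative k1' y) (at y)" for y
      unfolding k1_def k1'_def using udiff[OF r1] .
    have da2: "(a2 has_real_derivative a2' y) (at y)" for y
      unfolding a2_def a2'_def by (auto intro!: derivative_eq_intros d1)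
    have d2: "(k2 has_real_derivative k2' y) (at y)" for y
      unfolding k2_def k2'_def by (rule DERIV_chain2[OF udiff[OF r2] da2])
    have da3: "(a3 has_real_derivative a3' y) (at y)" for y
      unfolding a3_def a3'_def by (auto intro!: derivative_eq_intros d1 d2)
    have d3: "(k3 has_real_derivative k3' y) (at y)" for y
      unfolding k3_def k3'_def by (rule DERIV_chain2[OF udiff[OF r3] da3])
    have dX: "(Xmap u t n has_real_derivative X' y) (at y)" for y
      unfolding Xeq X'_def by (auto intro!: derivative_eq_intros d1 d2 d3)
    have grid: "Xgrid u t x n j = (Xmap u t n (x j), X' (x j))" for j
      unfolding Xgrid_def bu_def Xeq X'_def k1_def k1'_def k2_def k2'_def k3_def k3'_def
        a2_def a2'_def a3_def a3'_def t1_def dt_def Let_def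
      by (simp add: prod_eq_iff mult_ac)
    have Vn: "\<phi>h n \<in> Vh M x" and VSn: "\<phi>h (Suc n) \<in> Vh M x" using phiV nN by auto
    then have phd: "\<phi>h n differentiable at y" for y unfolding Vh_def C1T_def by auto
    show ?thesis
    proof (rule Ih_eq[OF sm VSn, symmetric], intro allI impI conjI)
      fix j assume j: "j < M"
      show "\<phi>h (Suc n) (x j) = (\<phi>h n \<circ> Xmap u t n) (x j)"
        using phiV Fstep nN j grid by auto
      have "((\<phi>h n \<circ> Xmap u t n) has_real_derivative
               deriv (\<phi>h n) (Xmap u t n (x j)) * X' (x j)) (at (x j))"
        using DERIV_chain[OF _ dX] phd DERIV_deriv_iff_real_differentiable by blast
      then have "deriv (\<phi>h n \<circ> Xmap u t n) (x j) = deriv (\<phi>h n) (Xmap u t n (x j)) * X' (x j)"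
        by (rule DERIV_imp_deriv)
      then show "deriv (\<phi>h (Suc n)) (x j) = deriv (\<phi>h n \<circ> Xmap u t n) (x j)"
        using phiV Gstep nN j grid by auto
    qed
  qed
  show ?thesis using part1 part2 by blast
qed

end
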